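(* Let $K$ be a simplex in a topological vector space $F$ and let $T:K\to 2^{K}$ be a correspondence. Assume that for each neighborhood $V$ of the origin in $F$ there is a weakly naturally quasiconvex correspondence $T^{V}:K\to 2^{K}$ such that $\mathrm{Gr}(T^{V})\subset \mathrm{cl}\,\mathrm{Gr}(T_V)$. Then there exists $x^*\in K$ such that $x^*\in\overline{T}(x^* )$.
   Context: A simplex is the convex hull of a finite affinely independent set. For a correspondence $T:X\to 2^Y$, $\mathrm{Gr}(T)=\{(x,y)\in X\times Y: y\in T(x)\}$; $\overline{T}(x)=\{y\in Y:(x,y)\in \mathrm{cl}_{X\times Y}\mathrm{Gr}(T)\}$; for $V\subset F$, $T_V:X\to 2^Y$ is defined by $T_V(x)=(T(x)+V)\cap Y$. $\Delta_{n-1}=\{(\lambda_1,\dots,\lambda_n)\in\mathbb{R}^n:\sum_i\lambda_i=1,\ \lambda_i\ge 0\}$. Weakly naturally quasiconvex (WNQ): let $X,Y$ be nonempty convex subsets of topological vector spaces. A correspondence $T:X\to 2^{Y}$ is weakly naturally quasiconvex if for each $n\in\mathbb{N}$ and each finite set $\{x_1,\dots,x_n\}\subset X$ there exist $y_i\in T(x_i)$ ($i=1,\dots,n$) and a bijection $g:\Delta_{n-1}\to\Delta_{n-1}$ (depending on $x_1,\dots,x_n$) of the form $g(\lambda_1,\dots,\lambda_n)=(g_1(\lambda_1),\dots,g_n(\lambda_n))$, where each $g_i:[0,1]\to[0,1]$ is continuous with $g_i(0)=0$ and $g_i(1)=1$, such that for every $(\lambda_1,\dots,\lambda_n)\in\Delta_{n-1}$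 we have $\sum_{i=1}^n g_i(\lambda_i)y_i\in T\big(\sum_{i=1}^n\lambda_i x_i\big)$. *)

theory Defs
  imports "HOL-Analysis.Analysis"
begin

definition tvs :: "'a::{real_vector,topological_space} itself \<Rightarrow> bool" where
  "tvs _ \<longleftrightarrow>
     continuous_on UNIV (\<lambda>p::'a \<times> 'a. fst p + snd p) \<and>
     continuous_on UNIV (\<lambda>p::real \<times> 'a. fst p *\<^sub>R snd p)"

definition is_simplex :: "'a::real_vector set \<Rightarrow> bool" where
  "is_simplex K \<longleftrightarrow> (\<exists>S. finite S \<and> S \<noteq> {} \<and> \<not> affine_dependent S \<and> K = convex hull S)"

definition Gr :: "'a set \<Rightarrow> ('a \<Rightarrow> 'b set) \<Rightarrow> ('a \<times> 'b) set" where
  "Gr X T = {(x, y). x \<in> X \<and> y \<in> T x}"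

definition clGr :: "'a::topological_space set \<Rightarrow> 'b::topological_space set
                   \<Rightarrow> ('a \<Rightarrow> 'b set) \<Rightarrow> ('a \<times> 'b) set" where
  "clGr X Y T = closure (Gr X T) \<inter> (X \<times> Y)"

definition Tbar :: "'a::topological_space set \<Rightarrow> 'b::topological_space set
                   \<Rightarrow> ('a \<Rightarrow> 'b set) \<Rightarrow> 'a \<Rightarrow> 'b set" where
  "Tbar X Y T x = {y \<in> Y. (x, y) \<in> clGr X Y T}"

definition TV :: "'b::plus set \<Rightarrow> ('a \<Rightarrow> 'b set) \<Rightarrow> 'b set \<Rightarrow> 'a \<Rightarrow> 'b set" where
  "TV Y T V x = {a + v | a v. a \<in> T x \<and> v \<in> V} \<inter> Y"

definition std_simplex :: "nat \<Rightarrow> (nat \<Rightarrow> real) set" where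
  "std_simplex n = {l. (\<forall>i<n. 0 \<le> l i) \<and> (\<Sum>i<n. l i) = 1 \<and> (\<forall>i\<ge>n. l i = 0)}"

definition WNQ :: "'a::real_vector set \<Rightarrow> 'b::real_vector set \<Rightarrow> ('a \<Rightarrow> 'b set) \<Rightarrow> bool" where
  "WNQ X Y T \<longleftrightarrow>
    (\<forall>n::nat. \<forall>x::nat \<Rightarrow> 'a. n \<ge> 1 \<and> (\<forall>i<n. x i \<in> X) \<longrightarrow>
      (\<exists>(y::nat \<Rightarrow> 'b) (g::nat \<Rightarrow> real \<Rightarrow> real).
         (\<forall>i<n. y i \<in> T (x i)) \<and>
         (\<forall>i<n. continuous_on {0..1} (g i) \<and> g i ` {0..1} \<subseteq> {0..1} \<and>
                g i 0 = 0 \<and> g i 1 = 1) \<and>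
         bij_betw (\<lambda>l i. if i < n then g i (l i) else 0) (std_simplex n) (std_simplex n) \<and>
         (\<forall>l\<in>std_simplex n. (\<Sum>i<n. g i (l i) *\<^sub>R y i) \<in> T (\<Sum>i<n. l i *\<^sub>R x i))))"

end

theory Submission
  imports Defs
begin


lemma cauchy01:
  fixes h :: "real \<Rightarrow> real"
  assumes add: "\<And>a b. 0 \<le> a \<Longrightarrow> 0 \<le> b \<Longrightarrow> a + b \<le> 1 \<Longrightarrow> h (a + b) = h a + h b"
    and nn: "\<And>t. 0 \<le> t \<Longrightarrow> t \<le> 1 \<Longrightarrow> 0 \<le> h t"
    and one: "h 1 = 1"
    and t: "0 \<le> t" "t \<le> 1"
  shows "h t = t"
proof -
  have h0: "h 0 = 0" using add[of 0 0] by simp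
  have mult: "h (real k * s) = real k * h s" if "0 \<le> s" "real k * s \<le> 1" for k s
    using that
  proof (induction k)
    case 0 then show ?case using h0 by simp
  next
    case (Suc k)
    have "real k * s \<le> 1" using Suc.prems by (simp add: algebra_simps)
    then have IH: "h (real k * s) = real k * h s" using Suc by simp
    have "h (real (Suc k) * s) = h (real k * s + s)" by (simp add: algebra_simps)
    also have "\<dots> = h (real k * s) + h s"
      using add[of "real k * s" s] Suc.prems by (simp add: algebra_simps)
    finally show ?case using IH by (simp add: algebra_simps)
  qed
  have mono: "h a \<le> h b" if "0 \<le> a" "a \<le> b" "b \<le> 1" for a b
    using add[of a "b - a"] nn[of "b - a"] that by simp
  have frac: "h (real k / real m) = real k / real m" if "m \<ge> 1" "k \<le> m" for k m
  proof -
    have "h (real m * (1 / real m)) = real m * h (1 / real m)"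
      using mult[of "1 / real m" m] that by simp
    then have hm: "h (1 / real m) = 1 / real m" using that one by (simp add: field_simps)
    have "h (real k * (1 / real m)) = real k * h (1 / real m)"
      using mult[of "1 / real m" k] that by (simp add: field_simps)
    then show ?thesis using hm by simp
  qed
  have low: "t' \<le> h t'" if "0 \<le> t'" "t' \<le> 1" for t'
  proof (rule ccontr)
    assume "\<not> t' \<le> h t'"
    then have pos: "t' - h t' > 0" by simp
    obtain m :: nat where m: "1 / (t' - h t') < real m" using reals_Archimedean2 by blast
    then have mpos: "real m > 0" using pos
      by (metis divide_pos_pos less_trans zero_less_one)
    then have m1: "m \<ge> 1" by simp
    have lt: "1 / real m < t' - h t'" using m pos mpos
      by (simp add: field_simps)
    define k where "k = nat (floor (real m * t'))"
    have kle: "real k \<le> real m * t'" unfolding k_def using that mpos by simp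
    have kgt: "real m * t' < real k + 1" unfolding k_def using that mpos by linarith
    have "real k \<le> real m" using kle that mpos
      by (meson mult_left_le order_trans less_imp_le)
    then have km: "k \<le> m" by simp
    have "real k / real m \<le> t'" using kle mpos by (simp add: field_simps)
    then have "h (real k / real m) \<le> h t'" using mono[of "real k / real m" t'] that mpos by simp
    then have "real k / real m \<le> h t'" using frac[OF m1 km] by simp
    moreover have "(real m * t' - 1) / real m < real k / real m"
      using kgt mpos by (intro divide_strict_right_mono) auto
    moreover have "t' - 1 / real m = (real m * t' - 1) / real m" using mpos by (simp add: field_simps)
    ultimately show False using lt by linarith
  qed
  have "t \<le> h t" using low t by simp
  moreover have "1 - t \<le> h (1 - t)" using low t by simp
  moreover have "h (t + (1 - t)) = h t + h (1 - t)" using add[of t "1 - t"] t by simp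
  ultimately show ?thesis using one by simp
qed



lemma triple:
  fixes g :: "nat \<Rightarrow> real \<Rightarrow> real"
  assumes H: "\<And>l. l \<in> std_simplex n \<Longrightarrow> (\<Sum>i<n. g i (l i)) = 1"
    and g0: "\<And>i. i < n \<Longrightarrow> g i 0 = 0"
    and ijk: "i < n" "j < n" "k < n" "i \<noteq> j" "i \<noteq> k" "j \<noteq> k"
    and ab: "0 \<le> a" "0 \<le> b" "a + b \<le> 1"
  shows "g i a + g j b + g k (1 - a - b) = 1"
proof -
  define l where "l = (\<lambda>m. if m = i then a else if m = j then b else if m = k then 1 - a - b else 0)"
  have "l \<in> std_simplex n"
  proof -
    have "(\<Sum>m<n. l m) = (\<Sum>m<n. (if m = i then a else 0) + (if m = j then b else 0) + (if m = k then 1 - a - b else 0))"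
      by (rule sum.cong) (use ijk in \<open>auto simp: l_def\<close>)
    also have "\<dots> = 1" using ijk by (simp add: sum.distrib)
    finally show ?thesis using ijk ab unfolding std_simplex_def l_def by auto
  qed
  then have "(\<Sum>m<n. g m (l m)) = 1" by (rule H)
  moreover have "(\<Sum>m<n. g m (l m)) = (\<Sum>m<n. (if m = i then g i a else 0) + (if m = j then g j b else 0) + (if m = k then g k (1 - a - b) else 0))"
    by (rule sum.cong) (use ijk g0 in \<open>auto simp: l_def\<close>)
  moreover have "\<dots> = g i a + g j b + g k (1 - a - b)" using ijk by (simp add: sum.distrib)
  ultimately show ?thesis by simp
qed

lemma g_id:
  fixes g :: "nat \<Rightarrow> real \<Rightarrow> real"
  assumes H: "\<And>l. l \<in> std_simplex n \<Longrightarrow> (\<Sum>i<n. g i (l i)) = 1"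
    and g0: "\<And>i. i < n \<Longrightarrow> g i 0 = 0"
    and gim: "\<And>i. i < n \<Longrightarrow> g i ` {0..1} \<subseteq> {0..1}"
    and n3: "n \<ge> 3" and i: "i < n" and t: "0 \<le> t" "t \<le> 1"
  shows "g i t = t"
proof -
  obtain j k where jk: "j < n" "k < n" "i \<noteq> j" "i \<noteq> k" "j \<noteq> k"
  proof -
    consider "i = 0" | "i = 1" | "i \<ge> 2" by linarith
    then show ?thesis
    proof cases
      case 1 show ?thesis by (rule that[of 1 2]) (use 1 n3 in auto)
    next
      case 2 show ?thesis by (rule that[of 0 2]) (use 2 n3 in auto)
    next
      case 3 show ?thesis by (rule that[of 0 1]) (use 3 n3 i in auto)
    qed
  qed
  note T = triple[of n g, OF H g0]
  have gj: "g j b = g i b" if "0 \<le> b" "b \<le> 1" for b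
    using T[of j i k b 0] T[of i j k b 0] jk i that g0 by simp
  show ?thesis
  proof (rule cauchy01[where h = "g i"])
    fix a b :: real assume "0 \<le> a" "0 \<le> b" "a + b \<le> 1"
    then show "g i (a + b) = g i a + g i b"
      using T[of i j k a b] T[of i j k "a+b" 0] jk i g0 gj[of b] by (simp add: algebra_simps)
  next
    fix s :: real assume "0 \<le> s" "s \<le> 1" then show "0 \<le> g i s" using gim[OF i] by (auto simp: image_subset_iff)
  next
    show "g i 1 = 1" using T[of i j k 1 0] jk i g0 by simp
  qed (use t in auto)
qed


lemma std_simplex_bounds:
  assumes "l \<in> std_simplex n"
  shows "0 \<le> l j" "l j \<le> 1"
proof -
  have l: "\<forall>i<n. 0 \<le> l i" "(\<Sum>i<n. l i) = 1" "\<forall>i\<ge>n. l i = 0"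
    using assms unfolding std_simplex_def by auto
  show "0 \<le> l j" using l by (cases "j < n") auto
  show "l j \<le> 1"
  proof (cases "j < n")
    case True
    have "l j \<le> (\<Sum>i<n. l i)" by (rule member_le_sum) (use l True in auto)
    then show ?thesis using l by simp
  qed (use l in auto)
qed

lemma compact_std_simplex: "compact (std_simplex n)"
proof -
  define F where "F = (\<lambda>i::nat. if i < n then {0..1::real} else {0})"
  have "compactin (product_topology (\<lambda>i. euclidean) UNIV) (PiE UNIV F)"
    by (subst compactin_PiE) (auto simp: F_def compactin_euclidean_iff)
  then have c: "compact (PiE UNIV F)"
    by (simp add: euclidean_product_topology compactin_euclidean_iff)
  have cl: "closed {l::nat\<Rightarrow>real. (\<Sum>i<n. l i) = 1}"
    by (rule closed_Collect_eq) (auto intro!: continuous_intros)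
  have "std_simplex n = PiE UNIV F \<inter> {l. (\<Sum>i<n. l i) = 1}"
  proof (rule set_eqI)
    fix l :: "nat \<Rightarrow> real"
    show "l \<in> std_simplex n \<longleftrightarrow> l \<in> PiE UNIV F \<inter> {l. (\<Sum>i<n. l i) = 1}"
    proof
      assume l: "l \<in> std_simplex n"
      have "l i \<in> F i" for i
        using std_simplex_bounds[OF l, of i] l unfolding F_def std_simplex_def by auto
      then show "l \<in> PiE UNIV F \<inter> {l. (\<Sum>i<n. l i) = 1}"
        using l unfolding PiE_UNIV_domain std_simplex_def by auto
    next
      assume l: "l \<in> PiE UNIV F \<inter> {l. (\<Sum>i<n. l i) = 1}"
      then have li: "l i \<in> F i" for i unfolding PiE_UNIV_domain by auto
      have "0 \<le> l i" if "i < n" for i using li[of i] that unfolding F_def by auto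
      moreover have "l i = 0" if "i \<ge> n" for i using li[of i] that unfolding F_def by auto
      ultimately show "l \<in> std_simplex n" using l unfolding std_simplex_def by auto
    qed
  qed
  then show ?thesis using compact_Int_closed[OF c cl] by simp
qed

lemma stationary:
  fixes \<mu> :: "nat \<Rightarrow> nat \<Rightarrow> real"
  assumes n: "n \<ge> 1" and mu: "\<And>i. i < n \<Longrightarrow> \<mu> i \<in> std_simplex n"
  shows "\<exists>\<nu>\<in>std_simplex n. \<forall>j<n. (\<Sum>i<n. \<nu> i * \<mu> i j) = \<nu> j"
proof -
  define P where "P = (\<lambda>\<nu> j. if j < n then (\<Sum>i<n. \<nu> i * \<mu> i j) else (0::real))"
  have Pin: "P \<nu> \<in> std_simplex n" if "\<nu> \<in> std_simplex n" for \<nu>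
  proof -
    have "(\<Sum>j<n. P \<nu> j) = (\<Sum>j<n. \<Sum>i<n. \<nu> i * \<mu> i j)" by (simp add: P_def)
    also have "\<dots> = (\<Sum>i<n. \<nu> i * (\<Sum>j<n. \<mu> i j))" by (subst sum.swap) (simp add: sum_distrib_left)
    also have "\<dots> = (\<Sum>i<n. \<nu> i)" using mu by (intro sum.cong) (auto simp: std_simplex_def)
    also have "\<dots> = 1" using that by (simp add: std_simplex_def)
    finally show ?thesis
      using std_simplex_bounds[OF that] std_simplex_bounds[OF mu]
      by (auto simp: std_simplex_def P_def intro!: sum_nonneg)
  qed
  define e where "e = (\<lambda>j::nat. if j = 0 then 1 else (0::real))"
  have e: "e \<in> std_simplex n" using n by (auto simp: std_simplex_def e_def)
  define p where "p t = (P ^^ t) e" for t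
  have p: "p t \<in> std_simplex n" for t
    by (induction t) (auto simp: p_def e Pin)
  have pS: "p (Suc t) j = (\<Sum>i<n. p t i * \<mu> i j)" if "j < n" for t j
    using that by (simp add: p_def P_def)
  define c where "c k = (\<lambda>j. (\<Sum>t\<le>k. p t j) / real (Suc k))" for k
  have cin: "c k \<in> std_simplex n" for k
  proof -
    have "(\<Sum>j<n. c k j) = (\<Sum>t\<le>k. \<Sum>j<n. p t j) / real (Suc k)"
      by (simp add: c_def sum_divide_distrib[symmetric]) (rule sum.swap)
    also have "\<dots> = 1" using p by (simp add: std_simplex_def)
    finally show ?thesis using p std_simplex_bounds[OF p]
      by (auto simp: std_simplex_def c_def intro!: sum_nonneg divide_nonneg_nonneg)
  qed
  have diff: "\<bar>(\<Sum>i<n. c k i * \<mu> i j) - c k j\<bar> \<le> inverse (real (Suc k))" if j: "j < n" for k j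
  proof -
    have "(\<Sum>i<n. c k i * \<mu> i j) = (\<Sum>t\<le>k. \<Sum>i<n. p t i * \<mu> i j) / real (Suc k)"
      by (simp add: c_def sum_divide_distrib sum_distrib_right) (subst sum.swap, simp)
    also have "\<dots> = (\<Sum>t\<le>k. p (Suc t) j) / real (Suc k)" using pS[OF j] by simp
    finally have "(\<Sum>i<n. c k i * \<mu> i j) - c k j = (\<Sum>t\<le>k. p (Suc t) j - p t j) / real (Suc k)"
      by (simp add: c_def sum_subtractf diff_divide_distrib)
    also have "\<dots> = (p (Suc k) j - p 0 j) / real (Suc k)"
      by (induction k) auto
    finally have eq: "(\<Sum>i<n. c k i * \<mu> i j) - c k j = (p (Suc k) j - p 0 j) / real (Suc k)" .
    have "\<bar>p (Suc k) j - p 0 j\<bar> \<le> 1"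
      using std_simplex_bounds[OF p, of "Suc k" j] std_simplex_bounds[OF p, of 0 j] by linarith
    then show ?thesis unfolding eq by (simp add: divide_inverse abs_mult mult_left_le_one_le)
  qed
  obtain L r where L: "L \<in> std_simplex n" "strict_mono r" "(c \<circ> r) \<longlonglongrightarrow> L"
    using seq_compactE[OF compact_imp_seq_compact[OF compact_std_simplex[of n]], of c] cin by metis
  have coord: "((\<lambda>k. c (r k) j) \<longlongrightarrow> L j) sequentially" for j
    using continuous_on_tendsto_compose[OF continuous_on_product_coordinates[of j] L(3)]
    by (simp add: o_def)
  show ?thesis
  proof (intro bexI[OF _ L(1)] allI impI)
    fix j assume j: "j < n"
    have t1: "((\<lambda>k. (\<Sum>i<n. c (r k) i * \<mu> i j) - c (r k) j) \<longlongrightarrow> (\<Sum>i<n. L i * \<mu> i j) - L j) sequentially"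
      by (intro tendsto_diff tendsto_sum tendsto_mult_right coord)
    have t2: "((\<lambda>k. (\<Sum>i<n. c (r k) i * \<mu> i j) - c (r k) j) \<longlongrightarrow> 0) sequentially"
    proof (rule Lim_null_comparison[OF _ LIMSEQ_inverse_real_of_nat])
      show "\<forall>\<^sub>F k in sequentially. norm ((\<Sum>i<n. c (r k) i * \<mu> i j) - c (r k) j) \<le> inverse (real (Suc k))"
      proof (rule always_eventually, rule allI)
        fix k
        have "k \<le> r k" using seq_suble[OF L(2)] by simp
        then have "inverse (real (Suc (r k))) \<le> inverse (real (Suc k))"
          by (simp add: le_imp_inverse_le)
        then show "norm ((\<Sum>i<n. c (r k) i * \<mu> i j) - c (r k) j) \<le> inverse (real (Suc k))"
          using diff[OF j, of "r k"] by (simp only: real_norm_def)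
      qed
    qed
    show "(\<Sum>i<n. L i * \<mu> i j) = L j" using LIMSEQ_unique[OF t1 t2] by simp
  qed
qed


lemma hull_rep:
  fixes x :: "nat \<Rightarrow> 'a::real_vector"
  assumes "y \<in> convex hull (x ` {..<n})"
  shows "\<exists>\<mu>\<in>std_simplex n. y = (\<Sum>j<n. \<mu> j *\<^sub>R x j)"
proof -
  define R where "R = {(\<Sum>j<n. \<mu> j *\<^sub>R x j) | \<mu>. \<mu> \<in> std_simplex n}"
  have sub: "x ` {..<n} \<subseteq> R"
  proof
    fix w assume "w \<in> x ` {..<n}"
    then obtain k where k: "k < n" "w = x k" by auto
    define \<mu> where "\<mu> = (\<lambda>m. if m = k then 1 else (0::real))"
    have "\<mu> \<in> std_simplex n" using k by (auto simp: std_simplex_def \<mu>_def)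
    moreover have "(\<Sum>j<n. \<mu> j *\<^sub>R x j) = w" proof -
      have "(\<Sum>j<n. \<mu> j *\<^sub>R x j) = (\<Sum>j<n. if j = k then x k else 0)"
        by (rule sum.cong) (auto simp: \<mu>_def)
      then show ?thesis using k by simp
    qed
    ultimately show "w \<in> R" unfolding R_def by blast
  qed
  have "convex R"
    unfolding convex_def
  proof (intro ballI allI impI)
    fix p q :: 'a and u v :: real
    assume p: "p \<in> R" and q: "q \<in> R" and uv: "0 \<le> u" "0 \<le> v" "u + v = 1"
    obtain \<mu>1 where m1: "\<mu>1 \<in> std_simplex n" "p = (\<Sum>j<n. \<mu>1 j *\<^sub>R x j)" using p R_def by auto
    obtain \<mu>2 where m2: "\<mu>2 \<in> std_simplex n" "q = (\<Sum>j<n. \<mu>2 j *\<^sub>R x j)" using q R_def by auto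
    define \<mu> where "\<mu> = (\<lambda>j. u * \<mu>1 j + v * \<mu>2 j)"
    have "\<mu> \<in> std_simplex n"
      using m1(1) m2(1) uv
      by (auto simp: std_simplex_def \<mu>_def sum.distrib sum_distrib_left[symmetric])
    moreover have "u *\<^sub>R p + v *\<^sub>R q = (\<Sum>j<n. \<mu> j *\<^sub>R x j)"
      by (simp add: m1 m2 \<mu>_def scaleR_sum_right scaleR_add_left sum.distrib)
    ultimately show "u *\<^sub>R p + v *\<^sub>R q \<in> R" unfolding R_def by blast
  qed
  then have "convex hull (x ` {..<n}) \<subseteq> R" using sub by (rule hull_minimal[rotated])
  then show ?thesis using assms R_def by auto
qed

lemma cont_comb:
  fixes x :: "nat \<Rightarrow> 'a::{real_vector,topological_space}"
  assumes "tvs TYPE('a)"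
  shows "continuous_on UNIV (\<lambda>l::nat\<Rightarrow>real. \<Sum>j<N. l j *\<^sub>R x j)"
proof (induction N)
  case 0 then show ?case by simp
next
  case (Suc N)
  have add: "continuous_on UNIV (\<lambda>p::'a \<times> 'a. fst p + snd p)"
    and sc: "continuous_on UNIV (\<lambda>p::real \<times> 'a. fst p *\<^sub>R snd p)"
    using assms by (auto simp: tvs_def)
  have c2: "continuous_on UNIV (\<lambda>l::nat\<Rightarrow>real. l N *\<^sub>R x N)"
    using continuous_on_compose2[OF sc continuous_on_Pair[OF continuous_on_product_coordinates[of N] continuous_on_const[of UNIV "x N"]]]
    by simp
  have "continuous_on UNIV (\<lambda>l::nat\<Rightarrow>real. (\<Sum>j<N. l j *\<^sub>R x j) + l N *\<^sub>R x N)"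
    using continuous_on_compose2[OF add continuous_on_Pair[OF Suc.IH c2]] by simp
  then show ?case by simp
qed



theorem theorem5:
  fixes K :: "'a::{real_vector,topological_space} set"
    and T :: "'a \<Rightarrow> 'a set"
  assumes "tvs TYPE('a)"
    and "is_simplex K"
    and "\<forall>x\<in>K. T x \<subseteq> K"
    and "\<forall>V. (\<exists>U. open U \<and> 0 \<in> U \<and> U \<subseteq> V) \<longrightarrow>
           (\<exists>TVV :: 'a \<Rightarrow> 'a set. (\<forall>x\<in>K. TVV x \<subseteq> K) \<and> WNQ K K TVV \<and>
               Gr K TVV \<subseteq> clGr K K (TV K T V))"
  shows "\<exists>x\<in>K. x \<in> Tbar K K T x"
proof -
  have addc: "continuous_on UNIV (\<lambda>p::'a \<times> 'a. fst p + snd p)"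
    and scc: "continuous_on UNIV (\<lambda>p::real \<times> 'a. fst p *\<^sub>R snd p)"
    using assms(1) by (auto simp: tvs_def)
  obtain S where S: "finite S" "S \<noteq> {}" "K = convex hull S"
    using assms(2) unfolding is_simplex_def by blast
  obtain m :: nat and x0 where mx0: "S = x0 ` {i. i < m}"
    using finite_imp_nat_seg_image_inj_on[OF S(1)] by auto
  have m: "m \<ge> 1" using S(2) mx0 by (cases m) auto
  define n where "n = m + 2"
  define x where "x i = (if i < m then x0 i else x0 0)" for i
  have n3: "n \<ge> 3" using m n_def by simp
  have xS: "x ` {..<n} = S"
  proof
    show "x ` {..<n} \<subseteq> S" using m by (auto simp: x_def mx0)
    show "S \<subseteq> x ` {..<n}"
    proof
      fix s assume "s \<in> S"
      then obtain i where "i < m" "s = x0 i" using mx0 by auto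
      then show "s \<in> x ` {..<n}" by (intro image_eqI[of _ _ i]) (auto simp: x_def n_def)
    qed
  qed
  define \<beta> where "\<beta> l = (\<Sum>j<n. l j *\<^sub>R x j)" for l
  have Kimg: "K = \<beta> ` std_simplex n"
  proof
    show "K \<subseteq> \<beta> ` std_simplex n"
    proof
      fix z assume "z \<in> K"
      then have "z \<in> convex hull (x ` {..<n})" using S(3) xS by simp
      then obtain \<mu> where "\<mu> \<in> std_simplex n" "z = (\<Sum>j<n. \<mu> j *\<^sub>R x j)"
        using hull_rep by blast
      then show "z \<in> \<beta> ` std_simplex n" unfolding \<beta>_def by blast
    qed
    show "\<beta> ` std_simplex n \<subseteq> K"
    proof
      fix z assume "z \<in> \<beta> ` std_simplex n"
      then obtain l where l: "l \<in> std_simplex n" "z = \<beta> l" by auto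
      show "z \<in> K" unfolding l(2) \<beta>_def S(3)
      proof (rule convex_sum)
        show "sum l {..<n} = 1" using l(1) by (simp add: std_simplex_def)
        show "\<And>i. i \<in> {..<n} \<Longrightarrow> 0 \<le> l i" using l(1) by (simp add: std_simplex_def)
        show "\<And>i. i \<in> {..<n} \<Longrightarrow> x i \<in> convex hull S"
          using xS by (intro hull_inc) blast
      qed auto
    qed
  qed
  have "compact (\<beta> ` std_simplex n)"
    unfolding \<beta>_def
    by (rule compact_continuous_image[OF continuous_on_subset[OF cont_comb[OF assms(1)]] compact_std_simplex]) simp
  then have cK: "compact K" using Kimg by simp
  have xK: "x i \<in> K" if "i < n" for i
  proof -
    have "x i \<in> S" using that xS by blast
    then show ?thesis unfolding S(3) by (rule hull_inc)
  qed
  have FP: "\<exists>z\<in>K. z \<in> TVV z" if TV1: "\<forall>x\<in>K. TVV x \<subseteq> K" and TV2: "WNQ K K TVV" for TVV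
  proof -
    have pre: "n \<ge> 1 \<and> (\<forall>i<n. x i \<in> K)" using n3 xK by auto
    have ex: "\<exists>(y::nat \<Rightarrow> 'a) (g::nat \<Rightarrow> real \<Rightarrow> real).
         (\<forall>i<n. y i \<in> TVV (x i)) \<and>
         (\<forall>i<n. continuous_on {0..1} (g i) \<and> g i ` {0..1} \<subseteq> {0..1} \<and>
                g i 0 = 0 \<and> g i 1 = 1) \<and>
         bij_betw (\<lambda>l i. if i < n then g i (l i) else 0) (std_simplex n) (std_simplex n) \<and>
         (\<forall>l\<in>std_simplex n. (\<Sum>i<n. g i (l i) *\<^sub>R y i) \<in> TVV (\<Sum>i<n. l i *\<^sub>R x i))"
      using TV2 pre unfolding WNQ_def by blast
    then obtain y g where yg0: "(\<forall>i<n. y i \<in> TVV (x i)) \<and>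
         (\<forall>i<n. continuous_on {0..1} (g i) \<and> g i ` {0..1} \<subseteq> {0..1} \<and>
                g i 0 = 0 \<and> g i 1 = 1) \<and>
         bij_betw (\<lambda>l i. if i < n then g i (l i) else 0) (std_simplex n) (std_simplex n) \<and>
         (\<forall>l\<in>std_simplex n. (\<Sum>i<n. g i (l i) *\<^sub>R y i) \<in> TVV (\<Sum>i<n. l i *\<^sub>R x i))"
      by (elim exE)
    note yg = yg0[THEN conjunct1] yg0[THEN conjunct2, THEN conjunct1]
       yg0[THEN conjunct2, THEN conjunct2, THEN conjunct1] yg0[THEN conjunct2, THEN conjunct2, THEN conjunct2]
    have "\<forall>i\<in>{..<n}. \<exists>\<mu>. \<mu> \<in> std_simplex n \<and> y i = \<beta> \<mu>"
    proof
      fix i assume "i \<in> {..<n}"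
      then have "y i \<in> K" using yg(1) TV1 xK by blast
      then show "\<exists>\<mu>. \<mu> \<in> std_simplex n \<and> y i = \<beta> \<mu>" using Kimg by auto
    qed
    then have "\<exists>\<mu>. \<forall>i\<in>{..<n}. \<mu> i \<in> std_simplex n \<and> y i = \<beta> (\<mu> i)"
      by (rule bchoice)
    then obtain \<mu> where mu0: "\<forall>i\<in>{..<n}. \<mu> i \<in> std_simplex n \<and> y i = \<beta> (\<mu> i)" ..
    then have mu: "\<And>i. i < n \<Longrightarrow> \<mu> i \<in> std_simplex n \<and> y i = \<beta> (\<mu> i)" by auto
    obtain \<nu> where nu: "\<nu> \<in> std_simplex n" "\<forall>j<n. (\<Sum>i<n. \<nu> i * \<mu> i j) = \<nu> j"
      using stationary[of n \<mu>] n3 mu by auto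
    have H: "(\<Sum>i<n. g i (l i)) = 1" if "l \<in> std_simplex n" for l
    proof -
      have "(\<lambda>i. if i < n then g i (l i) else 0) \<in> std_simplex n"
        using yg(3) that unfolding bij_betw_def by blast
      then show ?thesis by (simp add: std_simplex_def)
    qed
    have gid: "g i t = t" if "i < n" "0 \<le> t" "t \<le> 1" for i t
      by (rule g_id[of n g, OF H _ _ n3 that]) (use yg(2) in auto)
    have "(\<Sum>i<n. g i (\<nu> i) *\<^sub>R y i) = (\<Sum>i<n. \<nu> i *\<^sub>R y i)"
      by (rule sum.cong) (use gid std_simplex_bounds[OF nu(1)] in auto)
    also have "\<dots> = (\<Sum>i<n. \<nu> i *\<^sub>R (\<Sum>j<n. \<mu> i j *\<^sub>R x j))"
      by (rule sum.cong) (use mu in \<open>auto simp: \<beta>_def\<close>)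
    also have "\<dots> = (\<Sum>i<n. \<Sum>j<n. (\<nu> i * \<mu> i j) *\<^sub>R x j)"
      by (simp only: scaleR_sum_right scaleR_scaleR)
    also have "\<dots> = (\<Sum>j<n. \<Sum>i<n. (\<nu> i * \<mu> i j) *\<^sub>R x j)"
      by (rule sum.swap)
    also have "\<dots> = (\<Sum>j<n. (\<Sum>i<n. \<nu> i * \<mu> i j) *\<^sub>R x j)"
      by (simp only: scaleR_sum_left)
    also have "\<dots> = \<beta> \<nu>" unfolding \<beta>_def by (rule sum.cong) (use nu(2) in auto)
    finally have "\<beta> \<nu> \<in> TVV (\<beta> \<nu>)" using yg(4) nu(1) by (metis \<beta>_def)
    moreover have "\<beta> \<nu> \<in> K" using Kimg nu(1) by auto
    ultimately show ?thesis by blast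
  qed
  show ?thesis
  proof (rule ccontr)
    assume contra: "\<not> ?thesis"
    have notcl: "(z, z) \<notin> closure (Gr K T)" if "z \<in> K" for z
      using contra that by (auto simp: Tbar_def clGr_def)
    have subc: "continuous_on UNIV (\<lambda>p::'a \<times> 'a. fst p - snd p)"
    proof -
      have h1: "continuous_on UNIV ((\<lambda>q::real \<times> 'a. fst q *\<^sub>R snd q) \<circ> (\<lambda>p::'a \<times> 'a. (-1::real, snd p)))"
        by (rule continuous_on_compose)
           (intro continuous_on_Pair continuous_on_const continuous_on_snd continuous_on_id,
            rule continuous_on_subset[OF scc], simp)
      then have h1': "continuous_on UNIV (\<lambda>p::'a \<times> 'a. (-1::real) *\<^sub>R snd p)"
        by (simp only: o_def fst_conv snd_conv)
      have h2: "continuous_on UNIV ((\<lambda>q::'a \<times> 'a. fst q + snd q) \<circ> (\<lambda>p::'a \<times> 'a. (fst p, (-1::real) *\<^sub>R snd p)))"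
        by (rule continuous_on_compose)
           (intro continuous_on_Pair continuous_on_fst continuous_on_id h1',
            rule continuous_on_subset[OF addc], simp)
      then have "continuous_on UNIV (\<lambda>p::'a \<times> 'a. fst p + (-1::real) *\<^sub>R snd p)"
        by (simp only: o_def fst_conv snd_conv)
      then show ?thesis by simp
    qed
    have loc: "\<exists>Ob V0. open Ob \<and> open V0 \<and> z \<in> Ob \<and> 0 \<in> V0 \<and>
        (\<forall>a\<in>Ob. \<forall>b v. a \<in> K \<longrightarrow> b \<in> T a \<longrightarrow> v \<in> V0 \<longrightarrow> b + v \<notin> Ob)" if zK: "z \<in> K" for z
    proof -
      have "open (- closure (Gr K T))" by auto
      moreover have "(z, z) \<in> - closure (Gr K T)" using notcl[OF zK] by auto
      ultimately obtain A B where AB: "open A" "open B" "(z, z) \<in> A \<times> B" "A \<times> B \<subseteq> - closure (Gr K T)"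
        by (rule open_prod_elim)
      have "open ((\<lambda>p::'a \<times> 'a. fst p - snd p) -` B)"
        using continuous_on_open_vimage[OF open_UNIV, of "\<lambda>p::'a \<times> 'a. fst p - snd p"] subc AB(2) by simp
      moreover have "(z, 0) \<in> (\<lambda>p::'a \<times> 'a. fst p - snd p) -` B" using AB(3) by auto
      ultimately obtain P V0 where PV: "open P" "open V0" "(z, 0) \<in> P \<times> V0"
        "P \<times> V0 \<subseteq> (\<lambda>p::'a \<times> 'a. fst p - snd p) -` B"
        by (rule open_prod_elim)
      show ?thesis
      proof (rule exI[of _ "A \<inter> P"], rule exI[of _ V0], intro conjI ballI allI impI)
        show "open (A \<inter> P)" using AB PV by auto
        show "open V0" by fact
        show "z \<in> A \<inter> P" using AB PV by auto
        show "0 \<in> V0" using PV by auto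
        fix a b v assume a: "a \<in> A \<inter> P" "a \<in> K" "b \<in> T a" "v \<in> V0"
        show "b + v \<notin> A \<inter> P"
        proof
          assume bv: "b + v \<in> A \<inter> P"
          then have "(b + v) - v \<in> B" using PV(4) a(4) by auto
          then have "(a, b) \<in> A \<times> B" using a by auto
          then have "(a, b) \<notin> closure (Gr K T)" using AB(4) by auto
          moreover have "(a, b) \<in> Gr K T" using a by (auto simp: Gr_def)
          ultimately show False using closure_subset by blast
        qed
      qed
    qed
    have c1: "\<forall>z. \<exists>Ob V0. z \<in> K \<longrightarrow> open Ob \<and> open V0 \<and> z \<in> Ob \<and> 0 \<in> V0 \<and>
        (\<forall>a\<in>Ob. \<forall>b v. a \<in> K \<longrightarrow> b \<in> T a \<longrightarrow> v \<in> V0 \<longrightarrow> b + v \<notin> Ob)"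
    proof
      fix z show "\<exists>Ob V0. z \<in> K \<longrightarrow> open Ob \<and> open V0 \<and> z \<in> Ob \<and> 0 \<in> V0 \<and>
        (\<forall>a\<in>Ob. \<forall>b v. a \<in> K \<longrightarrow> b \<in> T a \<longrightarrow> v \<in> V0 \<longrightarrow> b + v \<notin> Ob)"
      proof (cases "z \<in> K")
        case True
        then obtain Ob V0 where "open Ob \<and> open V0 \<and> z \<in> Ob \<and> 0 \<in> V0 \<and>
          (\<forall>a\<in>Ob. \<forall>b v. a \<in> K \<longrightarrow> b \<in> T a \<longrightarrow> v \<in> V0 \<longrightarrow> b + v \<notin> Ob)"
          using loc by meson
        then show ?thesis by blast
      qed blast
    qed
    from choice[OF c1] obtain Ob where "\<forall>z. \<exists>V0. z \<in> K \<longrightarrow> open (Ob z) \<and> open V0 \<and> z \<in> Ob z \<and> 0 \<in> V0 \<and>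
        (\<forall>a\<in>Ob z. \<forall>b v. a \<in> K \<longrightarrow> b \<in> T a \<longrightarrow> v \<in> V0 \<longrightarrow> b + v \<notin> Ob z)" ..
    from choice[OF this] obtain V0 where "\<forall>z. z \<in> K \<longrightarrow> open (Ob z) \<and> open (V0 z) \<and> z \<in> Ob z \<and> 0 \<in> V0 z \<and>
        (\<forall>a\<in>Ob z. \<forall>b v. a \<in> K \<longrightarrow> b \<in> T a \<longrightarrow> v \<in> V0 z \<longrightarrow> b + v \<notin> Ob z)" ..
    then have OV: "\<And>z. z \<in> K \<Longrightarrow> open (Ob z) \<and> open (V0 z) \<and> z \<in> Ob z \<and> 0 \<in> V0 z \<and>
        (\<forall>a\<in>Ob z. \<forall>b v. a \<in> K \<longrightarrow> b \<in> T a \<longrightarrow> v \<in> V0 z \<longrightarrow> b + v \<notin> Ob z)"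
      by blast
    obtain F where F: "F \<subseteq> K" "finite F" "K \<subseteq> \<Union> (Ob ` F)"
      by (rule compactE_image[OF cK, of K Ob]) (use OV in auto)
    define V where "V = \<Inter> (V0 ` F)"
    have Vo: "open V" unfolding V_def using F OV by (intro open_INT) auto
    have V0: "0 \<in> V" unfolding V_def using F OV by auto
    obtain TVV where TVV: "\<forall>x\<in>K. TVV x \<subseteq> K" "WNQ K K TVV" "Gr K TVV \<subseteq> clGr K K (TV K T V)"
      using assms(4) Vo V0 by blast
    obtain z where z: "z \<in> K" "z \<in> TVV z" using FP[OF TVV(1,2)] by blast
    have "(z, z) \<in> closure (Gr K (TV K T V))"
      using TVV(3) z by (auto simp: Gr_def clGr_def)
    obtain w where w: "w \<in> F" "z \<in> Ob w" using F z by auto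
    have ow: "open (Ob w \<times> Ob w)" using OV F w by (auto intro: open_Times)
    have "(Ob w \<times> Ob w) \<inter> Gr K (TV K T V) \<noteq> {}"
    proof
      assume "(Ob w \<times> Ob w) \<inter> Gr K (TV K T V) = {}"
      then have "(Ob w \<times> Ob w) \<inter> closure (Gr K (TV K T V)) = {}"
        using open_Int_closure_eq_empty[OF ow] by blast
      then show False using \<open>(z, z) \<in> closure _\<close> w by auto
    qed
    then obtain a c where ac: "a \<in> Ob w" "c \<in> Ob w" "a \<in> K" "c \<in> TV K T V a"
      by (auto simp: Gr_def)
    then obtain b v where bv: "b \<in> T a" "v \<in> V" "c = b + v" by (auto simp: TV_def)
    have "v \<in> V0 w" using bv(2) w(1) by (auto simp: V_def)
    then show False using OV[of w] F w ac bv by blast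
  qed
qed

end
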